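(* Let $(\mathfrak A,\mathfrak A_0)$ be a Banach quasi *-algebra with unit $e$. The following are equivalent: (i) $\mathcal R_c(\mathfrak A,\mathfrak A_0)$ is sufficient; (ii) $(\mathfrak A,\mathfrak A_0)$ is fully representable. If moreover the positivity condition (P) holds, then (i) and (ii) are also equivalent to: (iii) $(\mathfrak A,\mathfrak A_0)$ is *-semisimple.
   Context: A quasi *-algebra $(\mathfrak A,\mathfrak A_0)$ consists of a complex vector space $\mathfrak A$ and a *-algebra $\mathfrak A_0$ which is a linear subspace of $\mathfrak A$, such that: $\mathfrak A$ carries an involution $a\mapsto a^*$ extending that of $\mathfrak A_0$; $\mathfrak A$ is a bimodule over $\mathfrak A_0$ whose module multiplications extend the multiplication of $\mathfrak A_0$, with $(xa)y=x(ay)$ and $a(xy)=(ax)y$ for all $a\in\mathfrak A$, $x,y\in\mathfrak A_0$; and $(ax)^*=x^*a^*$ for all $a\in\mathfrak A$, $x\in\mathfrak A_0$. A unit is an element $e\in\mathfrak A_0$ with $ae=ea=a$ for all $a\in\mathfrak A$. A normed quasi *-algebra is a quasi *-algebra with a norm $\|\cdot\|$ on $\mathfrak A$ such that $\|a^*\|=\|a\|$ for all $a$, $\mathfrak A_0$ is dense in $\mathfrak A$, and for each $x\in\mathfrak A_0$ the map $a\mapsto ax$ is continuous on $\mathfrak A$ (hence so is $a\mapsto xa$). It is a Banach quasi *-algebra if $(\mathfrak A,\|\cdot\|)$ is complete. A linear functional $\omega$ on $\mathfrak A$ is representable if (L.1) $\omega(x^*x)\ge0$ for all $x\in\mathfrak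 A_0$; (L.2) $\omega(y^*a^*x)=\overline{\omega(x^*ay)}$ for all $x,y\in\mathfrak A_0$, $a\in\mathfrak A$; (L.3) for every $a\in\mathfrak A$ there is $\gamma_a>0$ with $|\omega(a^*x)|\le\gamma_a\,\omega(x^*x)^{1/2}$ for all $x\in\mathfrak A_0$. $\mathcal R_c(\mathfrak A,\mathfrak A_0)$ is the set of norm-continuous representable functionals. For $\omega\in\mathcal R_c(\mathfrak A,\mathfrak A_0)$, $\varphi_\omega(x,y)=\omega(y^*x)$ on $\mathfrak A_0\times\mathfrak A_0$ is closable (i.e. $\varphi_\omega(x_n,x_n)\to0$ whenever $(x_n)\subset\mathfrak A_0$, $\|x_n\|\to0$ and $\varphi_\omega(x_n-x_m,x_n-x_m)\to0$); its closure $\overline{\varphi}_\omega$ has domain $D(\overline{\varphi}_\omega)$ consisting of those $a\in\mathfrak A$ admitting $(x_n)\subset\mathfrak A_0$ with $\|x_n-a\|\to0$ and $\varphi_\omega(x_n-x_m,x_n-x_m)\to0$. Set $\mathfrak A_{\mathcal R}=\bigcap_{\omega\in\mathcal R_c(\mathfrak A,\mathfrak A_0)}D(\overline{\varphi}_\omega)$ (and $\mathfrak A_{\mathcal R}=\mathfrak A$ if $\mathcal R_c=\{0\}$). $\mathfrak A_0^+=\{\sum_{k=1}^n x_k^*x_k: x_k\in\mathfrak A_0,n\in\mathbb N\}$ and $\mathfrak A^+$ is its norm closure (its elements are called positive, written $a\ge0$). $\mathcal R_c(\mathfrak A,\mathfrak A_0)$ is sufficient if for every $a\in\mathfrak A^+$,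 $a\ne0$, there is $\omega\in\mathcal R_c(\mathfrak A,\mathfrak A_0)$ with $\omega(a)>0$. $(\mathfrak A,\mathfrak A_0)$ is fully representable if $\mathcal R_c(\mathfrak A,\mathfrak A_0)$ is sufficient and $\mathfrak A_{\mathcal R}=\mathfrak A$. $\mathcal S_{\mathfrak A_0}(\mathfrak A)$ is the set of sesquilinear forms $\Omega$ on $\mathfrak A\times\mathfrak A$ with $\Omega(a,a)\ge0$, $\Omega(ax,y)=\Omega(x,a^*y)$ ($a\in\mathfrak A$, $x,y\in\mathfrak A_0$) and $|\Omega(a,b)|\le\|a\|\|b\|$ for all $a,b\in\mathfrak A$. $(\mathfrak A,\mathfrak A_0)$ is *-semisimple if for every $a\neq0$ there is $\Omega\in\mathcal S_{\mathfrak A_0}(\mathfrak A)$ with $\Omega(a,a)>0$. Condition (P): if $a\in\mathfrak A$ and $\omega(x^*ax)\ge0$ for every $\omega\in\mathcal R_c(\mathfrak A,\mathfrak A_0)$ and every $x\in\mathfrak A_0$, then $a\in\mathfrak A^+$. *)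

theory Defs
  imports "HOL-Analysis.Analysis" "HOL-Library.Complex_Order"
begin

text \<open>The underlying space of the quasi *-algebra is a type 'a of class banach (a real
Banach space) equipped with a complex scalar multiplication sm that extends the real
one and is compatible with the norm; i.e. a complex Banach space.
The bimodule multiplications are represented by one function qmult; qmult a x and
qmult x a are only meaningful (and only constrained) when x is in A0.\<close>

definition complex_structure :: "(complex \<Rightarrow> 'a::real_normed_vector \<Rightarrow> 'a) \<Rightarrow> bool" where
  "complex_structure sm \<longleftrightarrow>
     (\<forall>r a. sm (complex_of_real r) a = r *\<^sub>R a) \<and>
     (\<forall>c a b. sm c (a + b) = sm c a + sm c b) \<and>
     (\<forall>c d a. sm (c + d) a = sm c a + sm d a) \<and>
     (\<forall>c d a. sm (c * d) a = sm c (sm d a)) \<and>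
     (\<forall>c a. norm (sm c a) = cmod c * norm a)"

definition quasi_star_algebra ::
  "'a::real_normed_vector set \<Rightarrow> (complex \<Rightarrow> 'a \<Rightarrow> 'a) \<Rightarrow> ('a \<Rightarrow> 'a) \<Rightarrow> ('a \<Rightarrow> 'a \<Rightarrow> 'a) \<Rightarrow> bool" where
  "quasi_star_algebra A0 sm star qmult \<longleftrightarrow>
     complex_structure sm \<and>
     \<comment> \<open>A0 is a complex linear subspace\<close>
     0 \<in> A0 \<and> (\<forall>x\<in>A0. \<forall>y\<in>A0. x + y \<in> A0) \<and> (\<forall>c. \<forall>x\<in>A0. sm c x \<in> A0) \<and>
     \<comment> \<open>A0 is an associative algebra (closed under multiplication)\<close>
     (\<forall>x\<in>A0. \<forall>y\<in>A0. qmult x y \<in> A0) \<and>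
     \<comment> \<open>involution on A, preserving A0\<close>
     (\<forall>a b. star (a + b) = star a + star b) \<and>
     (\<forall>c a. star (sm c a) = sm (cnj c) (star a)) \<and>
     (\<forall>a. star (star a) = a) \<and>
     (\<forall>x\<in>A0. star x \<in> A0) \<and>
     \<comment> \<open>bilinearity of the module multiplications\<close>
     (\<forall>a b. \<forall>x\<in>A0. qmult (a + b) x = qmult a x + qmult b x \<and> qmult x (a + b) = qmult x a + qmult x b) \<and>
     (\<forall>a. \<forall>x\<in>A0. \<forall>y\<in>A0. qmult a (x + y) = qmult a x + qmult a y \<and> qmult (x + y) a = qmult x a + qmult y a) \<and>
     (\<forall>c a. \<forall>x\<in>A0. qmult (sm c a) x = sm c (qmult a x) \<and> qmult a (sm c x) = sm c (qmult a x) \<and>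
                    qmult (sm c x) a = sm c (qmult x a) \<and> qmult x (sm c a) = sm c (qmult x a)) \<and>
     \<comment> \<open>bimodule associativity laws\<close>
     (\<forall>a. \<forall>x\<in>A0. \<forall>y\<in>A0. qmult (qmult x a) y = qmult x (qmult a y)) \<and>
     (\<forall>a. \<forall>x\<in>A0. \<forall>y\<in>A0. qmult a (qmult x y) = qmult (qmult a x) y) \<and>
     (\<forall>a. \<forall>x\<in>A0. \<forall>y\<in>A0. qmult (qmult x y) a = qmult x (qmult y a)) \<and>
     \<comment> \<open>compatibility of involution and multiplication\<close>
     (\<forall>a. \<forall>x\<in>A0. star (qmult a x) = qmult (star x) (star a))"

definition qsa_unit ::
  "'a::real_normed_vector set \<Rightarrow> ('a \<Rightarrow> 'a \<Rightarrow> 'a) \<Rightarrow> 'a \<Rightarrow> bool" where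
  "qsa_unit A0 qmult e \<longleftrightarrow> e \<in> A0 \<and> (\<forall>a. qmult a e = a \<and> qmult e a = a)"

definition normed_quasi_star_algebra ::
  "'a::real_normed_vector set \<Rightarrow> (complex \<Rightarrow> 'a \<Rightarrow> 'a) \<Rightarrow> ('a \<Rightarrow> 'a) \<Rightarrow> ('a \<Rightarrow> 'a \<Rightarrow> 'a) \<Rightarrow> bool" where
  "normed_quasi_star_algebra A0 sm star qmult \<longleftrightarrow>
     quasi_star_algebra A0 sm star qmult \<and>
     (\<forall>a. norm (star a) = norm a) \<and>
     closure A0 = UNIV \<and>
     (\<forall>x\<in>A0. continuous_on UNIV (\<lambda>a. qmult a x) \<and> continuous_on UNIV (\<lambda>a. qmult x a))"

text \<open>Banach: completeness is provided by the type class banach.\<close>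
definition banach_quasi_star_algebra ::
  "'a::banach set \<Rightarrow> (complex \<Rightarrow> 'a \<Rightarrow> 'a) \<Rightarrow> ('a \<Rightarrow> 'a) \<Rightarrow> ('a \<Rightarrow> 'a \<Rightarrow> 'a) \<Rightarrow> bool" where
  "banach_quasi_star_algebra A0 sm star qmult \<longleftrightarrow> normed_quasi_star_algebra A0 sm star qmult"

definition clinear_fun :: "(complex \<Rightarrow> 'a \<Rightarrow> 'a) \<Rightarrow> ('a::real_normed_vector \<Rightarrow> complex) \<Rightarrow> bool" where
  "clinear_fun sm \<omega> \<longleftrightarrow> (\<forall>a b. \<omega> (a + b) = \<omega> a + \<omega> b) \<and> (\<forall>c a. \<omega> (sm c a) = c * \<omega> a)"

definition representable ::
  "'a::real_normed_vector set \<Rightarrow> (complex \<Rightarrow> 'a \<Rightarrow> 'a) \<Rightarrow> ('a \<Rightarrow> 'a) \<Rightarrow> ('a \<Rightarrow> 'a \<Rightarrow> 'a) \<Rightarrow> ('a \<Rightarrow> complex) \<Rightarrow> bool" where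
  "representable A0 sm star qmult \<omega> \<longleftrightarrow>
     clinear_fun sm \<omega> \<and>
     (\<forall>x\<in>A0. 0 \<le> \<omega> (qmult (star x) x)) \<and>
     (\<forall>x\<in>A0. \<forall>y\<in>A0. \<forall>a. \<omega> (qmult (qmult (star y) (star a)) x) = cnj (\<omega> (qmult (qmult (star x) a) y))) \<and>
     (\<forall>a. \<exists>\<gamma>>0. \<forall>x\<in>A0. cmod (\<omega> (qmult (star a) x)) \<le> \<gamma> * sqrt (cmod (\<omega> (qmult (star x) x))))"

definition Rc ::
  "'a::real_normed_vector set \<Rightarrow> (complex \<Rightarrow> 'a \<Rightarrow> 'a) \<Rightarrow> ('a \<Rightarrow> 'a) \<Rightarrow> ('a \<Rightarrow> 'a \<Rightarrow> 'a) \<Rightarrow> ('a \<Rightarrow> complex) set" where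
  "Rc A0 sm star qmult = {\<omega>. representable A0 sm star qmult \<omega> \<and> continuous_on UNIV \<omega>}"

text \<open>Domain of the closure of the form phi_omega(x,y) = omega(y* x).\<close>
definition closure_dom ::
  "'a::real_normed_vector set \<Rightarrow> ('a \<Rightarrow> 'a) \<Rightarrow> ('a \<Rightarrow> 'a \<Rightarrow> 'a) \<Rightarrow> ('a \<Rightarrow> complex) \<Rightarrow> 'a set" where
  "closure_dom A0 star qmult \<omega> =
     {a. \<exists>X. (\<forall>n. X n \<in> A0) \<and> X \<longlonglongrightarrow> a \<and>
            (\<forall>\<epsilon>>0. \<exists>N. \<forall>n\<ge>N. \<forall>m\<ge>N. cmod (\<omega> (qmult (star (X n - X m)) (X n - X m))) < \<epsilon>)}"

definition A_R ::
  "'a::real_normed_vector set \<Rightarrow> (complex \<Rightarrow> 'a \<Rightarrow> 'a) \<Rightarrow> ('a \<Rightarrow> 'a) \<Rightarrow> ('a \<Rightarrow> 'a \<Rightarrow> 'a) \<Rightarrow> 'a set" where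
  "A_R A0 sm star qmult =
     (if Rc A0 sm star qmult = {\<lambda>_. 0} then UNIV
      else (\<Inter>\<omega>\<in>Rc A0 sm star qmult. closure_dom A0 star qmult \<omega>))"

definition A0_plus ::
  "'a::real_normed_vector set \<Rightarrow> ('a \<Rightarrow> 'a) \<Rightarrow> ('a \<Rightarrow> 'a \<Rightarrow> 'a) \<Rightarrow> 'a set" where
  "A0_plus A0 star qmult =
     {a. \<exists>(n::nat) xs. (\<forall>k<n. xs k \<in> A0) \<and> a = (\<Sum>k<n. qmult (star (xs k)) (xs k))}"

definition A_plus ::
  "'a::real_normed_vector set \<Rightarrow> ('a \<Rightarrow> 'a) \<Rightarrow> ('a \<Rightarrow> 'a \<Rightarrow> 'a) \<Rightarrow> 'a set" where
  "A_plus A0 star qmult = closure (A0_plus A0 star qmult)"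

definition Rc_sufficient ::
  "'a::real_normed_vector set \<Rightarrow> (complex \<Rightarrow> 'a \<Rightarrow> 'a) \<Rightarrow> ('a \<Rightarrow> 'a) \<Rightarrow> ('a \<Rightarrow> 'a \<Rightarrow> 'a) \<Rightarrow> bool" where
  "Rc_sufficient A0 sm star qmult \<longleftrightarrow>
     (\<forall>a\<in>A_plus A0 star qmult. a \<noteq> 0 \<longrightarrow> (\<exists>\<omega>\<in>Rc A0 sm star qmult. 0 < \<omega> a))"

definition fully_representable ::
  "'a::real_normed_vector set \<Rightarrow> (complex \<Rightarrow> 'a \<Rightarrow> 'a) \<Rightarrow> ('a \<Rightarrow> 'a) \<Rightarrow> ('a \<Rightarrow> 'a \<Rightarrow> 'a) \<Rightarrow> bool" where
  "fully_representable A0 sm star qmult \<longleftrightarrow>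
     Rc_sufficient A0 sm star qmult \<and> A_R A0 sm star qmult = UNIV"

definition sesquilinear_form :: "(complex \<Rightarrow> 'a \<Rightarrow> 'a) \<Rightarrow> ('a::real_normed_vector \<Rightarrow> 'a \<Rightarrow> complex) \<Rightarrow> bool" where
  "sesquilinear_form sm \<Omega> \<longleftrightarrow>
     (\<forall>a b c. \<Omega> (a + b) c = \<Omega> a c + \<Omega> b c) \<and>
     (\<forall>a b c. \<Omega> a (b + c) = \<Omega> a b + \<Omega> a c) \<and>
     (\<forall>z a b. \<Omega> (sm z a) b = z * \<Omega> a b) \<and>
     (\<forall>z a b. \<Omega> a (sm z b) = cnj z * \<Omega> a b)"

definition S_A0 ::
  "'a::real_normed_vector set \<Rightarrow> (complex \<Rightarrow> 'a \<Rightarrow> 'a) \<Rightarrow> ('a \<Rightarrow> 'a) \<Rightarrow> ('a \<Rightarrow> 'a \<Rightarrow> 'a) \<Rightarrow> ('a \<Rightarrow> 'a \<Rightarrow> complex) set" where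
  "S_A0 A0 sm star qmult =
     {\<Omega>. sesquilinear_form sm \<Omega> \<and>
          (\<forall>a. 0 \<le> \<Omega> a a) \<and>
          (\<forall>a. \<forall>x\<in>A0. \<forall>y\<in>A0. \<Omega> (qmult a x) y = \<Omega> x (qmult (star a) y)) \<and>
          (\<forall>a b. cmod (\<Omega> a b) \<le> norm a * norm b)}"

definition star_semisimple ::
  "'a::real_normed_vector set \<Rightarrow> (complex \<Rightarrow> 'a \<Rightarrow> 'a) \<Rightarrow> ('a \<Rightarrow> 'a) \<Rightarrow> ('a \<Rightarrow> 'a \<Rightarrow> 'a) \<Rightarrow> bool" where
  "star_semisimple A0 sm star qmult \<longleftrightarrow>
     (\<forall>a. a \<noteq> 0 \<longrightarrow> (\<exists>\<Omega>\<in>S_A0 A0 sm star qmult. 0 < \<Omega> a a))"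

definition condition_P ::
  "'a::real_normed_vector set \<Rightarrow> (complex \<Rightarrow> 'a \<Rightarrow> 'a) \<Rightarrow> ('a \<Rightarrow> 'a) \<Rightarrow> ('a \<Rightarrow> 'a \<Rightarrow> 'a) \<Rightarrow> bool" where
  "condition_P A0 sm star qmult \<longleftrightarrow>
     (\<forall>a. (\<forall>\<omega>\<in>Rc A0 sm star qmult. \<forall>x\<in>A0. 0 \<le> \<omega> (qmult (qmult (star x) a) x))
          \<longrightarrow> a \<in> A_plus A0 star qmult)"

end

theory Submission
  imports Defs
begin

lemma eps0: "(x::real) \<ge> 0 \<Longrightarrow> (\<And>s. s > 0 \<Longrightarrow> x \<le> K / s) \<Longrightarrow> x = 0"
proof (rule ccontr)
  assume x: "x \<ge> 0" "\<And>s. s > 0 \<Longrightarrow> x \<le> K / s" "x \<noteq> 0"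
  then have xp: "x > 0" by simp
  have "x \<le> K / (2*(\<bar>K\<bar>+1)/x)" using x(2)[of "2*(\<bar>K\<bar>+1)/x"] xp by (simp add: add_pos_nonneg)
  also have "\<dots> = K * x / (2*(\<bar>K\<bar>+1))" by simp
  also have "\<dots> < x" using xp by (simp add: divide_less_eq) (smt (verit) mult_right_mono abs_ge_self)
  finally show False by simp
qed
lemma ubp:
  fixes F :: "('a::banach \<Rightarrow> 'b::real_normed_vector) set"
  assumes lin: "\<And>f. f \<in> F \<Longrightarrow> linear f"
    and cont: "\<And>f. f \<in> F \<Longrightarrow> continuous_on UNIV f"
    and pb: "\<And>a. \<exists>K. \<forall>f\<in>F. norm (f a) \<le> K"
  shows "\<exists>M. \<forall>f\<in>F. \<forall>a. norm (f a) \<le> M * norm a"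
proof -
  define S where "S n = {a. \<forall>f\<in>F. norm (f a) \<le> real n}" for n :: nat
  have clS: "closed (S n)" for n
  proof -
    have "S n = (\<Inter>f\<in>F. {a. norm (f a) \<le> real n})" by (auto simp: S_def)
    moreover have "closed {a. norm (f a) \<le> real n}" if "f \<in> F" for f
      using cont[OF that] by (intro closed_Collect_le continuous_intros) (auto simp: continuous_on_eq_continuous_at)
    ultimately show ?thesis by auto
  qed
  have U: "\<Union>(range S) = UNIV"
  proof safe
    fix a :: 'a
    obtain K where K: "\<forall>f\<in>F. norm (f a) \<le> K" using pb by blast
    obtain n :: nat where "K \<le> real n" using real_arch_simple by blast
    then have "a \<in> S n" using K unfolding S_def by (auto intro: order_trans)
    then show "a \<in> \<Union>(range S)" by blast
  qed auto
  have "\<exists>n. interior (S n) \<noteq> {}"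
  proof (rule ccontr)
    assume "\<nexists>n. interior (S n) \<noteq> {}"
    have "euclidean interior_of \<Union>(range S) = {}"
    proof (rule Baire_category_alt)
      show "completely_metrizable_space (euclidean::'a topology) \<or> locally_compact_space (euclidean::'a topology) \<and> regular_space (euclidean::'a topology)"
        by (rule disjI1, rule completely_metrizable_space_euclidean)
      show "countable (range S)" by simp
      fix T assume "T \<in> range S"
      then obtain m where "T = S m" by blast
      moreover have "interior T = {}" using \<open>\<nexists>n. interior (S n) \<noteq> {}\<close> \<open>T = S m\<close> by blast
      ultimately show "closedin euclidean T \<and> euclidean interior_of T = {}"
        using clS[of m] by (simp add: euclidean_interior_of flip: closed_closedin)
    qed
    then show False using U by (simp add: euclidean_interior_of)
  qed
  then obtain n a0 where "a0 \<in> interior (S n)" by blast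
  then obtain r where r: "r > 0" "ball a0 r \<subseteq> S n"
    by (meson open_contains_ball_eq open_interior interior_subset subset_trans)
  show ?thesis
  proof (intro exI ballI allI)
    fix f a assume f: "f \<in> F"
    show "norm (f a) \<le> (4 * real n / r) * norm a"
    proof (cases "a = 0")
      case True then show ?thesis using linear_0[OF lin[OF f]] by simp
    next
      case False
      define h where "h = (r / (2 * norm a)) *\<^sub>R a"
      have nh: "norm h = r / 2" using False r by (simp add: h_def)
      have "a0 + h \<in> S n" "a0 \<in> S n" using r nh by (auto simp: dist_norm)
      then have b1: "norm (f (a0 + h)) \<le> real n" "norm (f a0) \<le> real n" using f by (auto simp: S_def)
      have "f h = f (a0 + h) - f a0" using linear_add[OF lin[OF f]] by simp
      then have fh: "norm (f h) \<le> 2 * real n" using b1 norm_triangle_ineq4[of "f (a0+h)" "f a0"] by simp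
      have "f a = (2 * norm a / r) *\<^sub>R f h"
        using False r by (simp add: h_def linear_scale[OF lin[OF f]])
      then have "norm (f a) = (2 * norm a / r) * norm (f h)" using r by simp
      also have "\<dots> \<le> (2 * norm a / r) * (2 * real n)"
        using fh r by (intro mult_left_mono) auto
      finally show ?thesis by (simp add: field_simps)
    qed
  qed
qed

locale bqsa =
  fixes A0 :: "'a::banach set" and sm :: "complex \<Rightarrow> 'a \<Rightarrow> 'a"
    and star :: "'a \<Rightarrow> 'a" and qmult :: "'a \<Rightarrow> 'a \<Rightarrow> 'a" and e :: 'a
  assumes bq: "banach_quasi_star_algebra A0 sm star qmult"
    and un: "qsa_unit A0 qmult e"
begin

lemma qsa: "quasi_star_algebra A0 sm star qmult"
  using bq by (simp add: banach_quasi_star_algebra_def normed_quasi_star_algebra_def)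
lemma cs: "complex_structure sm" using qsa by (simp add: quasi_star_algebra_def)

lemma sm_real: "sm (complex_of_real r) a = r *\<^sub>R a" using cs by (simp add: complex_structure_def)
lemma sm_add: "sm c (a + b) = sm c a + sm c b" using cs by (simp add: complex_structure_def)
lemma sm_addl: "sm (c + d) a = sm c a + sm d a" using cs by (simp add: complex_structure_def)
lemma sm_mult: "sm (c * d) a = sm c (sm d a)" using cs by (simp add: complex_structure_def)
lemma sm_norm: "norm (sm c a) = cmod c * norm a" using cs by (simp add: complex_structure_def)
lemma sm_one[simp]: "sm 1 a = a" using sm_real[of 1 a] by simp
lemma sm_zero[simp]: "sm 0 a = 0" using sm_real[of 0 a] by simp
lemma sm_m1: "sm (-1) a = - a" using sm_real[of "-1" a] by simp
lemma sm_0r[simp]: "sm c 0 = 0" using sm_norm[of c 0] by simp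
lemma sm_minus: "sm c (a - b) = sm c a - sm c b"
  using sm_add[of c "a - b" b] by (simp add: algebra_simps)
lemma sm_uminus: "sm c (- a) = - sm c a"
  using sm_minus[of c 0 a] by simp
lemma sm_scaleR: "sm c (r *\<^sub>R a) = r *\<^sub>R sm c a"
  by (metis sm_mult sm_real mult.commute)
lemma sm_bl: "bounded_linear (sm c)"
  by (rule bounded_linear_intro[where K="cmod c"]) (auto simp: sm_add sm_scaleR sm_norm)

lemma A0_0: "0 \<in> A0" using qsa by (simp add: quasi_star_algebra_def)
lemma A0_add: "x \<in> A0 \<Longrightarrow> y \<in> A0 \<Longrightarrow> x + y \<in> A0" using qsa by (simp add: quasi_star_algebra_def)
lemma A0_sm: "x \<in> A0 \<Longrightarrow> sm c x \<in> A0" using qsa by (simp add: quasi_star_algebra_def)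
lemma A0_uminus: "x \<in> A0 \<Longrightarrow> - x \<in> A0" using A0_sm[of x "-1"] sm_m1 by simp
lemma A0_diff: "x \<in> A0 \<Longrightarrow> y \<in> A0 \<Longrightarrow> x - y \<in> A0" using A0_add A0_uminus by (metis diff_conv_add_uminus)
lemma A0_mult: "x \<in> A0 \<Longrightarrow> y \<in> A0 \<Longrightarrow> qmult x y \<in> A0" using qsa by (simp add: quasi_star_algebra_def)
lemma A0_star: "x \<in> A0 \<Longrightarrow> star x \<in> A0" using qsa by (simp add: quasi_star_algebra_def)

lemma star_add: "star (a + b) = star a + star b" using qsa by (simp add: quasi_star_algebra_def)
lemma star_sm: "star (sm c a) = sm (cnj c) (star a)" using qsa by (simp add: quasi_star_algebra_def)
lemma star_star[simp]: "star (star a) = a" using qsa by (simp add: quasi_star_algebra_def)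
lemma star_0[simp]: "star 0 = 0" using star_add[of 0 0] by simp
lemma star_diff: "star (a - b) = star a - star b" using star_add[of "a - b" b] by (simp add: algebra_simps)
lemma star_uminus: "star (- a) = - star a" using star_diff[of 0 a] by simp
lemma star_norm: "norm (star a) = norm a"
  using bq by (simp add: banach_quasi_star_algebra_def normed_quasi_star_algebra_def)
lemma star_bl: "bounded_linear star"
  by (rule bounded_linear_intro[where K=1])
     (auto simp: star_add star_norm simp flip: sm_real intro: star_sm[THEN trans])

lemma dense: "closure A0 = UNIV"
  using bq by (simp add: banach_quasi_star_algebra_def normed_quasi_star_algebra_def)
lemma cont_r: "x \<in> A0 \<Longrightarrow> continuous_on UNIV (\<lambda>a. qmult a x)"
  using bq by (simp add: banach_quasi_star_algebra_def normed_quasi_star_algebra_def)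
lemma cont_l: "x \<in> A0 \<Longrightarrow> continuous_on UNIV (\<lambda>a. qmult x a)"
  using bq by (simp add: banach_quasi_star_algebra_def normed_quasi_star_algebra_def)
lemma approx: obtains X where "\<And>n. X n \<in> A0" "X \<longlonglongrightarrow> a"
  using dense closure_sequential by (metis UNIV_I)

lemma qm_addl: "x \<in> A0 \<Longrightarrow> qmult (a + b) x = qmult a x + qmult b x" using qsa by (simp add: quasi_star_algebra_def)
lemma qm_addr: "x \<in> A0 \<Longrightarrow> qmult x (a + b) = qmult x a + qmult x b" using qsa by (simp add: quasi_star_algebra_def)
lemma qm_addr0: "x \<in> A0 \<Longrightarrow> y \<in> A0 \<Longrightarrow> qmult a (x + y) = qmult a x + qmult a y" using qsa by (simp add: quasi_star_algebra_def)
lemma qm_addl0: "x \<in> A0 \<Longrightarrow> y \<in> A0 \<Longrightarrow> qmult (x + y) a = qmult x a + qmult y a" using qsa by (simp add: quasi_star_algebra_def)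
lemma qm_sml: "x \<in> A0 \<Longrightarrow> qmult (sm c a) x = sm c (qmult a x)" using qsa by (simp add: quasi_star_algebra_def)
lemma qm_smr0: "x \<in> A0 \<Longrightarrow> qmult a (sm c x) = sm c (qmult a x)" using qsa by (simp add: quasi_star_algebra_def)
lemma qm_sml0: "x \<in> A0 \<Longrightarrow> qmult (sm c x) a = sm c (qmult x a)" using qsa by (simp add: quasi_star_algebra_def)
lemma qm_smr: "x \<in> A0 \<Longrightarrow> qmult x (sm c a) = sm c (qmult x a)" using qsa by (simp add: quasi_star_algebra_def)
lemma assoc1: "x \<in> A0 \<Longrightarrow> y \<in> A0 \<Longrightarrow> qmult (qmult x a) y = qmult x (qmult a y)" using qsa by (simp add: quasi_star_algebra_def)
lemma assoc2: "x \<in> A0 \<Longrightarrow> y \<in> A0 \<Longrightarrow> qmult a (qmult x y) = qmult (qmult a x) y" using qsa by (simp add: quasi_star_algebra_def)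
lemma assoc3: "x \<in> A0 \<Longrightarrow> y \<in> A0 \<Longrightarrow> qmult (qmult x y) a = qmult x (qmult y a)" using qsa by (simp add: quasi_star_algebra_def)
lemma star_qm: "x \<in> A0 \<Longrightarrow> star (qmult a x) = qmult (star x) (star a)" using qsa by (simp add: quasi_star_algebra_def)

lemma e_A0: "e \<in> A0" using un by (simp add: qsa_unit_def)
lemma e_r[simp]: "qmult a e = a" using un by (simp add: qsa_unit_def)
lemma e_l[simp]: "qmult e a = a" using un by (simp add: qsa_unit_def)
lemma star_e[simp]: "star e = e"
proof -
  have "a = qmult (star e) a" for a using star_qm[OF e_A0, of "star a"] by simp
  from this[of e] show ?thesis by simp
qed

lemma qm_diffl: "x \<in> A0 \<Longrightarrow> qmult (a - b) x = qmult a x - qmult b x"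
  using qm_addl[of x "a - b" b] by (simp add: algebra_simps)
lemma qm_diffr: "x \<in> A0 \<Longrightarrow> qmult x (a - b) = qmult x a - qmult x b"
  using qm_addr[of x "a - b" b] by (simp add: algebra_simps)
lemma qm_uminusl: "x \<in> A0 \<Longrightarrow> qmult (- a) x = - qmult a x" using qm_diffl[of x 0 a] qm_diffl[of x 0 0] by simp
lemma qm_uminusr: "x \<in> A0 \<Longrightarrow> qmult x (- a) = - qmult x a" using qm_diffr[of x 0 a] qm_diffr[of x 0 0] by simp
lemma qm_diffl0: "x \<in> A0 \<Longrightarrow> y \<in> A0 \<Longrightarrow> qmult (x - y) a = qmult x a - qmult y a"
  using qm_addl0[of "x - y" y a] A0_diff by (simp add: algebra_simps)
lemma qm_diffr0: "x \<in> A0 \<Longrightarrow> y \<in> A0 \<Longrightarrow> qmult a (x - y) = qmult a x - qmult a y"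
  using qm_addr0[of "x - y" y a] A0_diff by (simp add: algebra_simps)

end

context bqsa begin

lemma Rc_rep: "\<omega> \<in> Rc A0 sm star qmult \<Longrightarrow> representable A0 sm star qmult \<omega>" by (simp add: Rc_def)
lemma Rc_cont: "\<omega> \<in> Rc A0 sm star qmult \<Longrightarrow> continuous_on UNIV \<omega>" by (simp add: Rc_def)

context fixes \<omega> assumes w: "\<omega> \<in> Rc A0 sm star qmult"
begin
lemma w_add: "\<omega> (a + b) = \<omega> a + \<omega> b" using Rc_rep[OF w] by (simp add: representable_def clinear_fun_def)
lemma w_sm: "\<omega> (sm c a) = c * \<omega> a" using Rc_rep[OF w] by (simp add: representable_def clinear_fun_def)
lemma w_0[simp]: "\<omega> 0 = 0" using w_add[of 0 0] by simp
lemma w_diff: "\<omega> (a - b) = \<omega> a - \<omega> b" using w_add[of "a - b" b] by (simp add: algebra_simps)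
lemma w_uminus: "\<omega> (- a) = - \<omega> a" using w_diff[of 0 a] by simp
lemma w_scaleR: "\<omega> (r *\<^sub>R a) = r *\<^sub>R \<omega> a" using w_sm[of "complex_of_real r" a] by (simp add: sm_real scaleR_conv_of_real)
lemma w_linear: "linear \<omega>" by (rule linearI) (auto simp: w_add w_scaleR)
lemma w_cont: "continuous_on UNIV \<omega>" using Rc_cont[OF w] .
lemma w_pos: "x \<in> A0 \<Longrightarrow> 0 \<le> \<omega> (qmult (star x) x)" using Rc_rep[OF w] by (simp add: representable_def)
lemma w_L2: "x \<in> A0 \<Longrightarrow> y \<in> A0 \<Longrightarrow> \<omega> (qmult (qmult (star y) (star a)) x) = cnj (\<omega> (qmult (qmult (star x) a) y))"
  using Rc_rep[OF w] by (simp add: representable_def)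
lemma w_L3: "\<exists>\<gamma>>0. \<forall>x\<in>A0. cmod (\<omega> (qmult (star a) x)) \<le> \<gamma> * sqrt (cmod (\<omega> (qmult (star x) x)))"
  using Rc_rep[OF w] by (simp add: representable_def)
lemma w_herm: "y \<in> A0 \<Longrightarrow> \<omega> (qmult (star y) a) = cnj (\<omega> (qmult (star a) y))"
  using w_L2[of y e a] e_A0 by simp
lemma w_real: "x \<in> A0 \<Longrightarrow> \<omega> (qmult (star x) x) = complex_of_real (cmod (\<omega> (qmult (star x) x)))"
  using w_pos[of x] by (simp add: less_eq_complex_def cmod_def complex_eq_iff)

lemma w_sm_sq: "y \<in> A0 \<Longrightarrow> \<omega> (qmult (star (sm c y)) a) = cnj c * \<omega> (qmult (star y) a)"
  by (simp add: star_sm qm_sml0 A0_star w_sm)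
lemma w_sm_sq2: "y \<in> A0 \<Longrightarrow> \<omega> (qmult (star (sm c y)) (sm c y)) = (cnj c * c) * \<omega> (qmult (star y) y)"
  by (simp add: w_sm_sq qm_smr A0_star w_sm)

lemma f_linear: "y \<in> A0 \<Longrightarrow> linear (\<lambda>a. \<omega> (qmult (star y) a))"
  by (rule linearI) (auto simp: qm_addr A0_star w_add simp flip: sm_real simp: qm_smr w_sm scaleR_conv_of_real)
lemma f_cont: "y \<in> A0 \<Longrightarrow> continuous_on UNIV (\<lambda>a. \<omega> (qmult (star y) a))"
  using continuous_on_compose2[OF w_cont cont_l[OF A0_star]] by auto

lemma bound1: "\<exists>M>0. \<forall>y\<in>A0. \<forall>a. cmod (\<omega> (qmult (star y) a)) \<le> M * sqrt (cmod (\<omega> (qmult (star y) y))) * norm a"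
proof -
  define F where "F = {(\<lambda>a. \<omega> (qmult (star y) a)) | y. y \<in> A0 \<and> cmod (\<omega> (qmult (star y) y)) \<le> 1}"
  have "\<exists>M. \<forall>f\<in>F. \<forall>a. norm (f a) \<le> M * norm a"
  proof (rule ubp)
    show "linear f" "continuous_on UNIV f" if "f \<in> F" for f
    proof -
      from that obtain y where "f = (\<lambda>a. \<omega> (qmult (star y) a))" "y \<in> A0" unfolding F_def by blast
      then show "linear f" "continuous_on UNIV f" using f_linear f_cont by simp_all
    qed
    fix a
    obtain \<gamma> where g: "\<gamma> > 0" "\<forall>x\<in>A0. cmod (\<omega> (qmult (star a) x)) \<le> \<gamma> * sqrt (cmod (\<omega> (qmult (star x) x)))"
      using w_L3[of a] by blast
    have "norm (f a) \<le> \<gamma>" if "f \<in> F" for f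
    proof -
      obtain y where y: "f = (\<lambda>a. \<omega> (qmult (star y) a))" "y \<in> A0" "cmod (\<omega> (qmult (star y) y)) \<le> 1"
        using \<open>f \<in> F\<close> unfolding F_def by blast
      have "norm (f a) = cmod (\<omega> (qmult (star a) y))" using w_herm[OF y(2), of a] y(1) by simp
      also have "\<dots> \<le> \<gamma> * sqrt (cmod (\<omega> (qmult (star y) y)))" using g(2) y(2) by blast
      also have "\<dots> \<le> \<gamma> * 1" using y g by (intro mult_left_mono) auto
      finally show ?thesis by simp
    qed
    then show "\<exists>K. \<forall>f\<in>F. norm (f a) \<le> K" by blast
  qed
  then obtain M0 where M0: "\<forall>f\<in>F. \<forall>a. norm (f a) \<le> M0 * norm a" by blast
  define M where "M = max M0 1"
  have M: "\<forall>f\<in>F. \<forall>a. norm (f a) \<le> M * norm a"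
  proof (intro ballI allI)
    fix f a assume "f \<in> F"
    then have "norm (f a) \<le> M0 * norm a" using M0 by blast
    also have "\<dots> \<le> M * norm a" by (intro mult_right_mono) (auto simp: M_def)
    finally show "norm (f a) \<le> M * norm a" .
  qed
  have key: "s * cmod (\<omega> (qmult (star y) a)) \<le> M * norm a"
    if "y \<in> A0" "s > 0" "s^2 * cmod (\<omega> (qmult (star y) y)) \<le> 1" for y a s
  proof -
    have inF: "(\<lambda>a. \<omega> (qmult (star (sm (of_real s) y)) a)) \<in> F"
      unfolding F_def using that A0_sm[of y]
      by (auto simp: w_sm_sq2 norm_mult power2_eq_square)
    then have "cmod (\<omega> (qmult (star (sm (of_real s) y)) a)) \<le> M * norm a" using M[rule_format, OF inF, of a] by simp
    then show ?thesis using that by (simp add: w_sm_sq norm_mult)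
  qed
  show ?thesis
  proof (intro exI conjI ballI allI)
    show "M > 0" by (simp add: M_def)
    fix y a assume y: "y \<in> A0"
    define t where "t = cmod (\<omega> (qmult (star y) y))"
    show "cmod (\<omega> (qmult (star y) a)) \<le> M * sqrt t * norm a"
    proof (cases "t = 0")
      case True
      have "cmod (\<omega> (qmult (star y) a)) \<le> M * norm a / s" if "s > 0" for s
        using key[OF y that] True that by (simp add: t_def field_simps)
      then have "cmod (\<omega> (qmult (star y) a)) = 0"
        by (intro eps0[of _ "M * norm a"]) auto
      then show ?thesis using True by simp
    next
      case False
      then have tp: "t > 0" by (simp add: t_def)
      have "(1 / sqrt t) * cmod (\<omega> (qmult (star y) a)) \<le> M * norm a"
        using key[OF y, of "1 / sqrt t"] tp by (simp add: t_def power_divide)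
      then show ?thesis using tp by (simp add: field_simps mult.commute)
    qed
  qed
qed

end
end

context bqsa begin
context fixes \<omega> assumes w: "\<omega> \<in> Rc A0 sm star qmult"
begin

lemma bound2: "\<exists>C>0. (\<forall>y\<in>A0. \<forall>a. cmod (\<omega> (qmult (star y) a)) \<le> C * norm y * norm a) \<and>
   (\<forall>y\<in>A0. cmod (\<omega> (qmult (star y) y)) \<le> C * (norm y)^2)"
proof -
  obtain M where M: "M > 0" "\<forall>y\<in>A0. \<forall>a. cmod (\<omega> (qmult (star y) a)) \<le> M * sqrt (cmod (\<omega> (qmult (star y) y))) * norm a"
    using bound1[OF w] by blast
  have st: "sqrt (cmod (\<omega> (qmult (star y) y))) \<le> M * norm y" if y: "y \<in> A0" for y
  proof -
    define t where "t = cmod (\<omega> (qmult (star y) y))"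
    have t0: "t \<ge> 0" by (simp add: t_def)
    have "t \<le> M * sqrt t * norm y" using M(2) y by (simp add: t_def)
    moreover have "t = sqrt t * sqrt t" using t0 by simp
    ultimately have "sqrt t * sqrt t \<le> sqrt t * (M * norm y)" by (simp add: mult_ac)
    then show ?thesis unfolding t_def[symmetric]
      by (metis mult_le_cancel_left_pos not_le real_sqrt_ge_zero t0 mult_nonneg_nonneg M(1) norm_ge_zero less_le)
  qed
  show ?thesis
  proof (intro exI conjI ballI allI)
    show "M * M > 0" using M by simp
    fix y a assume y: "y \<in> A0"
    have "cmod (\<omega> (qmult (star y) a)) \<le> M * sqrt (cmod (\<omega> (qmult (star y) y))) * norm a" using M(2) y by blast
    also have "\<dots> \<le> M * (M * norm y) * norm a"
      using st[OF y] M by (intro mult_right_mono mult_left_mono) auto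
    finally show "cmod (\<omega> (qmult (star y) a)) \<le> M * M * norm y * norm a" by (simp add: mult_ac)
  next
    fix y assume y: "y \<in> A0"
    have "cmod (\<omega> (qmult (star y) y)) = (sqrt (cmod (\<omega> (qmult (star y) y))))^2" by simp
    also have "\<dots> \<le> (M * norm y)^2" using st[OF y] by (intro power_mono) auto
    finally show "cmod (\<omega> (qmult (star y) y)) \<le> M * M * (norm y)^2" by (simp add: power2_eq_square mult_ac)
  qed
qed

lemma cdom: "closure_dom A0 star qmult \<omega> = UNIV"
proof -
  obtain C where C: "C > 0" "\<forall>y\<in>A0. cmod (\<omega> (qmult (star y) y)) \<le> C * (norm y)^2"
    using bound2 by blast
  have "a \<in> closure_dom A0 star qmult \<omega>" for a
  proof -
    obtain X where X: "\<And>n. X n \<in> A0" "X \<longlonglongrightarrow> a" using approx by blast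
    have Ca: "Cauchy X" using X(2) by (rule LIMSEQ_imp_Cauchy)
    have "\<exists>N. \<forall>n\<ge>N. \<forall>m\<ge>N. cmod (\<omega> (qmult (star (X n - X m)) (X n - X m))) < \<epsilon>" if "\<epsilon> > 0" for \<epsilon>
    proof -
      have "sqrt (\<epsilon> / C) > 0" using that C by simp
      then obtain N where N: "\<forall>m\<ge>N. \<forall>n\<ge>N. dist (X m) (X n) < sqrt (\<epsilon> / C)"
        using Ca unfolding Cauchy_def by blast
      show ?thesis
      proof (intro exI allI impI)
        fix n m assume "n \<ge> N" "m \<ge> N"
        then have d: "norm (X n - X m) < sqrt (\<epsilon> / C)" using N by (simp add: dist_norm)
        have "cmod (\<omega> (qmult (star (X n - X m)) (X n - X m))) \<le> C * (norm (X n - X m))^2"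
          using C(2) A0_diff X(1) by blast
        also have "\<dots> < C * (sqrt (\<epsilon> / C))^2"
          using d C by (intro mult_strict_left_mono power_strict_mono) auto
        also have "\<dots> = \<epsilon>" using C that by simp
        finally show "cmod (\<omega> (qmult (star (X n - X m)) (X n - X m))) < \<epsilon>" .
      qed
    qed
    then show ?thesis unfolding closure_dom_def using X by blast
  qed
  then show ?thesis by blast
qed

end
end

context bqsa begin

definition CC :: "('a \<Rightarrow> complex) \<Rightarrow> real" where
  "CC \<omega> = (SOME C. C > 0 \<and> (\<forall>y\<in>A0. \<forall>a. cmod (\<omega> (qmult (star y) a)) \<le> C * norm y * norm a))"
definition sq :: "'a \<Rightarrow> nat \<Rightarrow> 'a" where
  "sq b = (SOME Y. (\<forall>n. Y n \<in> A0) \<and> Y \<longlonglongrightarrow> b)"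
definition Om :: "('a \<Rightarrow> complex) \<Rightarrow> 'a \<Rightarrow> 'a \<Rightarrow> complex" where
  "Om \<omega> a b = lim (\<lambda>n. \<omega> (qmult (star (sq b n)) a))"

lemma sq: "sq b n \<in> A0" "sq b \<longlonglongrightarrow> b"
proof -
  obtain X where "\<And>n. X n \<in> A0" "X \<longlonglongrightarrow> b" using approx by blast
  then have "\<exists>Y. (\<forall>n. Y n \<in> A0) \<and> Y \<longlonglongrightarrow> b" by blast
  then have "(\<forall>n. sq b n \<in> A0) \<and> sq b \<longlonglongrightarrow> b" unfolding sq_def by (rule someI_ex)
  then show "sq b n \<in> A0" "sq b \<longlonglongrightarrow> b" by auto
qed

context fixes \<omega> assumes w: "\<omega> \<in> Rc A0 sm star qmult"
begin

lemma CC: "CC \<omega> > 0" "y \<in> A0 \<Longrightarrow> cmod (\<omega> (qmult (star y) a)) \<le> CC \<omega> * norm y * norm a"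
proof -
  have "\<exists>C. C > 0 \<and> (\<forall>y\<in>A0. \<forall>a. cmod (\<omega> (qmult (star y) a)) \<le> C * norm y * norm a)"
    using bound2[OF w] by blast
  then have "CC \<omega> > 0 \<and> (\<forall>y\<in>A0. \<forall>a. cmod (\<omega> (qmult (star y) a)) \<le> CC \<omega> * norm y * norm a)"
    unfolding CC_def by (rule someI_ex)
  then show "CC \<omega> > 0" "y \<in> A0 \<Longrightarrow> cmod (\<omega> (qmult (star y) a)) \<le> CC \<omega> * norm y * norm a" by auto
qed

lemma gd: "y \<in> A0 \<Longrightarrow> z \<in> A0 \<Longrightarrow> \<omega> (qmult (star y) a) - \<omega> (qmult (star z) a) = \<omega> (qmult (star (y - z)) a)"
  by (simp add: star_diff qm_diffl0 A0_star w_diff[OF w])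

lemma gdb: "y \<in> A0 \<Longrightarrow> z \<in> A0 \<Longrightarrow> cmod (\<omega> (qmult (star y) a) - \<omega> (qmult (star z) a)) \<le> CC \<omega> * norm (y - z) * norm a"
  using gd CC(2)[of "y - z" a] A0_diff by simp

lemma gconv: assumes Y: "\<And>n. Y n \<in> A0" "Y \<longlonglongrightarrow> b"
  shows "convergent (\<lambda>n. \<omega> (qmult (star (Y n)) a))"
proof -
  have Ca: "Cauchy Y" using Y(2) by (rule LIMSEQ_imp_Cauchy)
  have "Cauchy (\<lambda>n. \<omega> (qmult (star (Y n)) a))"
  proof (rule metric_CauchyI)
    fix \<epsilon> :: real assume "\<epsilon> > 0"
    define \<delta> where "\<delta> = \<epsilon> / (CC \<omega> * (norm a + 1))"
    have dp: "\<delta> > 0" using \<open>\<epsilon> > 0\<close> CC(1) unfolding \<delta>_def by (intro divide_pos_pos mult_pos_pos) (auto intro: add_nonneg_pos)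
    then obtain N where N: "\<forall>m\<ge>N. \<forall>n\<ge>N. dist (Y m) (Y n) < \<delta>" using Ca unfolding Cauchy_def by blast
    show "\<exists>M. \<forall>m\<ge>M. \<forall>n\<ge>M. dist (\<omega> (qmult (star (Y m)) a)) (\<omega> (qmult (star (Y n)) a)) < \<epsilon>"
    proof (intro exI allI impI)
      fix m n assume "m \<ge> N" "n \<ge> N"
      then have d: "norm (Y m - Y n) < \<delta>" using N by (simp add: dist_norm)
      show "dist (\<omega> (qmult (star (Y m)) a)) (\<omega> (qmult (star (Y n)) a)) < \<epsilon>"
      proof -
        have "dist (\<omega> (qmult (star (Y m)) a)) (\<omega> (qmult (star (Y n)) a)) \<le> CC \<omega> * norm (Y m - Y n) * norm a"
          unfolding dist_norm using gdb Y(1) by blast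
        also have "\<dots> \<le> CC \<omega> * norm (Y m - Y n) * (norm a + 1)"
          using CC(1) by (intro mult_left_mono) auto
        also have "\<dots> < CC \<omega> * \<delta> * (norm a + 1)"
          using d CC(1) by (intro mult_strict_right_mono mult_strict_left_mono) (auto intro: add_nonneg_pos)
        also have "\<dots> = \<epsilon>" proof - have na: "norm a + 1 > 0" by (rule add_nonneg_pos) simp_all show ?thesis using CC(1) na by (simp add: \<delta>_def) qed
        finally show ?thesis .
      qed
    qed
  qed
  then show ?thesis by (rule Cauchy_convergent)
qed

lemma gdiff0: assumes Y: "\<And>n. Y n \<in> A0" "Y \<longlonglongrightarrow> b" and Z: "\<And>n. Z n \<in> A0" "Z \<longlonglongrightarrow> b"
  shows "(\<lambda>n. \<omega> (qmult (star (Y n)) a) - \<omega> (qmult (star (Z n)) a)) \<longlonglongrightarrow> 0"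
proof (rule Lim_null_comparison)
  show "\<forall>\<^sub>F n in sequentially. norm (\<omega> (qmult (star (Y n)) a) - \<omega> (qmult (star (Z n)) a)) \<le> CC \<omega> * norm (Y n - Z n) * norm a"
    using gdb Y(1) Z(1) by auto
  have "(\<lambda>n. Y n - Z n) \<longlonglongrightarrow> 0" using tendsto_diff[OF Y(2) Z(2)] by simp
  then have "(\<lambda>n. norm (Y n - Z n)) \<longlonglongrightarrow> 0" by (rule tendsto_norm_zero)
  then show "(\<lambda>n. CC \<omega> * norm (Y n - Z n) * norm a) \<longlonglongrightarrow> 0"
    using tendsto_mult_right_zero tendsto_mult_left_zero by blast
qed

lemma Om_lim: assumes Y: "\<And>n. Y n \<in> A0" "Y \<longlonglongrightarrow> b"
  shows "(\<lambda>n. \<omega> (qmult (star (Y n)) a)) \<longlonglongrightarrow> Om \<omega> a b"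
proof -
  have "(\<lambda>n. \<omega> (qmult (star (sq b n)) a)) \<longlonglongrightarrow> Om \<omega> a b"
    unfolding Om_def using gconv[OF sq] by (simp add: convergent_LIMSEQ_iff)
  moreover have "(\<lambda>n. \<omega> (qmult (star (Y n)) a) - \<omega> (qmult (star (sq b n)) a)) \<longlonglongrightarrow> 0"
    by (rule gdiff0[OF Y sq])
  ultimately have "(\<lambda>n. (\<omega> (qmult (star (Y n)) a) - \<omega> (qmult (star (sq b n)) a)) + \<omega> (qmult (star (sq b n)) a)) \<longlonglongrightarrow> 0 + Om \<omega> a b"
    by (intro tendsto_add)
  then show ?thesis by simp
qed

lemma Om_A0: "y \<in> A0 \<Longrightarrow> Om \<omega> a y = \<omega> (qmult (star y) a)"
proof -
  assume y: "y \<in> A0"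
  have "(\<lambda>n. \<omega> (qmult (star y) a)) \<longlonglongrightarrow> Om \<omega> a y" using Om_lim[of "\<lambda>_. y" y a] y by simp
  then show ?thesis using LIMSEQ_unique[OF _ tendsto_const] by metis
qed

end
end

context bqsa begin
context fixes \<omega> assumes w: "\<omega> \<in> Rc A0 sm star qmult"
begin

lemma Om_add1: "Om \<omega> (a + a') b = Om \<omega> a b + Om \<omega> a' b"
proof -
  have "(\<lambda>n. \<omega> (qmult (star (sq b n)) a) + \<omega> (qmult (star (sq b n)) a')) \<longlonglongrightarrow> Om \<omega> a b + Om \<omega> a' b"
    by (intro tendsto_add Om_lim[OF w] sq)
  moreover have "(\<lambda>n. \<omega> (qmult (star (sq b n)) a) + \<omega> (qmult (star (sq b n)) a')) = (\<lambda>n. \<omega> (qmult (star (sq b n)) (a + a')))"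
    by (simp add: qm_addr A0_star sq w_add[OF w])
  ultimately show ?thesis using Om_lim[OF w sq, of b "a + a'"] LIMSEQ_unique by metis
qed

lemma Om_sm1: "Om \<omega> (sm z a) b = z * Om \<omega> a b"
proof -
  have "(\<lambda>n. z * \<omega> (qmult (star (sq b n)) a)) \<longlonglongrightarrow> z * Om \<omega> a b"
    by (intro tendsto_mult_left Om_lim[OF w] sq)
  moreover have "(\<lambda>n. z * \<omega> (qmult (star (sq b n)) a)) = (\<lambda>n. \<omega> (qmult (star (sq b n)) (sm z a)))"
    by (simp add: qm_smr A0_star sq w_sm[OF w])
  ultimately show ?thesis using Om_lim[OF w sq, of b "sm z a"] LIMSEQ_unique by metis
qed

lemma Om_add2: "Om \<omega> a (b + c) = Om \<omega> a b + Om \<omega> a c"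
proof -
  have "(\<lambda>n. \<omega> (qmult (star (sq b n)) a) + \<omega> (qmult (star (sq c n)) a)) \<longlonglongrightarrow> Om \<omega> a b + Om \<omega> a c"
    by (intro tendsto_add Om_lim[OF w] sq)
  moreover have "(\<lambda>n. \<omega> (qmult (star (sq b n)) a) + \<omega> (qmult (star (sq c n)) a)) = (\<lambda>n. \<omega> (qmult (star (sq b n + sq c n)) a))"
    by (simp add: star_add qm_addl0 A0_star sq w_add[OF w])
  moreover have "(\<lambda>n. \<omega> (qmult (star (sq b n + sq c n)) a)) \<longlonglongrightarrow> Om \<omega> a (b + c)"
    by (intro Om_lim[OF w] A0_add sq tendsto_add)
  ultimately show ?thesis using LIMSEQ_unique by metis
qed

lemma Om_sm2: "Om \<omega> a (sm z b) = cnj z * Om \<omega> a b"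
proof -
  have "(\<lambda>n. cnj z * \<omega> (qmult (star (sq b n)) a)) \<longlonglongrightarrow> cnj z * Om \<omega> a b"
    by (intro tendsto_mult_left Om_lim[OF w] sq)
  moreover have "(\<lambda>n. cnj z * \<omega> (qmult (star (sq b n)) a)) = (\<lambda>n. \<omega> (qmult (star (sm z (sq b n))) a))"
    by (simp add: w_sm_sq[OF w] sq)
  moreover have "(\<lambda>n. \<omega> (qmult (star (sm z (sq b n))) a)) \<longlonglongrightarrow> Om \<omega> a (sm z b)"
    by (intro Om_lim[OF w] A0_sm sq bounded_linear.tendsto[OF sm_bl])
  ultimately show ?thesis using LIMSEQ_unique by metis
qed

lemma Om_diff1: "Om \<omega> (a - a') b = Om \<omega> a b - Om \<omega> a' b"
  using Om_add1[of "a - a'" a' b] by simp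
lemma Om_diff2: "Om \<omega> a (b - c) = Om \<omega> a b - Om \<omega> a c"
  using Om_add2[of a "b - c" c] by simp

lemma Om_bd: "cmod (Om \<omega> a b) \<le> CC \<omega> * norm b * norm a"
proof (rule tendsto_le[OF trivial_limit_sequentially])
  show "(\<lambda>n. cmod (\<omega> (qmult (star (sq b n)) a))) \<longlonglongrightarrow> cmod (Om \<omega> a b)"
    by (intro tendsto_norm Om_lim[OF w] sq)
  show "(\<lambda>n. CC \<omega> * norm (sq b n) * norm a) \<longlonglongrightarrow> CC \<omega> * norm b * norm a"
    by (intro tendsto_intros sq)
  show "\<forall>\<^sub>F n in sequentially. cmod (\<omega> (qmult (star (sq b n)) a)) \<le> CC \<omega> * norm (sq b n) * norm a"
    using CC(2)[OF w sq(1)] by simp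
qed


end
end

context bqsa begin
context fixes \<omega> assumes w: "\<omega> \<in> Rc A0 sm star qmult"
begin

lemma Om_inv: assumes x: "x \<in> A0" and y: "y \<in> A0"
  shows "Om \<omega> (qmult a x) y = Om \<omega> x (qmult (star a) y)"
proof -
  obtain X where X: "\<And>n. X n \<in> A0" "X \<longlonglongrightarrow> a" using approx by blast
  define Y where "Y n = qmult (star (X n)) y" for n
  have Y0: "Y n \<in> A0" for n using X(1) y by (simp add: Y_def A0_mult A0_star)
  have sX: "(\<lambda>n. star (X n)) \<longlonglongrightarrow> star a" by (intro bounded_linear.tendsto[OF star_bl] X)
  have YL: "Y \<longlonglongrightarrow> qmult (star a) y"
    unfolding Y_def using continuous_on_tendsto_compose[OF cont_r[OF y] sX] by simp
  have "(\<lambda>n. \<omega> (qmult (star (Y n)) x)) \<longlonglongrightarrow> Om \<omega> x (qmult (star a) y)"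
    by (rule Om_lim[OF w Y0 YL])
  moreover have "(\<lambda>n. \<omega> (qmult (star (Y n)) x)) = (\<lambda>n. \<omega> (qmult (star y) (qmult (X n) x)))"
    by (simp add: Y_def star_qm y assoc1 A0_star x)
  moreover have "(\<lambda>n. \<omega> (qmult (star y) (qmult (X n) x))) \<longlonglongrightarrow> \<omega> (qmult (star y) (qmult a x))"
  proof -
    have c: "continuous_on UNIV (\<lambda>b. \<omega> (qmult (star y) (qmult b x)))"
      using continuous_on_compose2[OF f_cont[OF w y] cont_r[OF x]] by auto
    show ?thesis using continuous_on_tendsto_compose[OF c X(2)] by simp
  qed
  ultimately have "Om \<omega> x (qmult (star a) y) = \<omega> (qmult (star y) (qmult a x))" using LIMSEQ_unique by metis
  then show ?thesis using Om_A0[OF w y] by simp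
qed


end
end

context bqsa begin
context fixes \<omega> assumes w: "\<omega> \<in> Rc A0 sm star qmult"
begin

lemma Om_pos: "0 \<le> Om \<omega> a a"
proof -
  obtain X where X: "\<And>n. X n \<in> A0" "X \<longlonglongrightarrow> a" using approx by blast
  have conv: "(\<lambda>n. Om \<omega> (X n) (X n)) \<longlonglongrightarrow> Om \<omega> a a"
  proof -
    have "(\<lambda>n. Om \<omega> (X n) (X n) - Om \<omega> a a) \<longlonglongrightarrow> 0"
    proof (rule Lim_null_comparison)
      have "(\<lambda>n. X n - a) \<longlonglongrightarrow> 0" using tendsto_diff[OF X(2) tendsto_const[of a]] by simp
      then have z: "(\<lambda>n. norm (X n - a)) \<longlonglongrightarrow> 0" by (rule tendsto_norm_zero)
      have "(\<lambda>n. CC \<omega> * norm (X n) * norm (X n - a) + CC \<omega> * norm (X n - a) * norm a) \<longlonglongrightarrow>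
              CC \<omega> * norm a * 0 + CC \<omega> * 0 * norm a"
        by (intro tendsto_intros X z)
      then show "(\<lambda>n. CC \<omega> * norm (X n) * norm (X n - a) + CC \<omega> * norm (X n - a) * norm a) \<longlonglongrightarrow> 0" by simp
      show "\<forall>\<^sub>F n in sequentially. norm (Om \<omega> (X n) (X n) - Om \<omega> a a) \<le> CC \<omega> * norm (X n) * norm (X n - a) + CC \<omega> * norm (X n - a) * norm a"
      proof (intro always_eventually allI)
        fix n
        have "Om \<omega> (X n) (X n) - Om \<omega> a a = Om \<omega> (X n - a) (X n) + Om \<omega> a (X n - a)"
          by (simp add: Om_diff1[OF w] Om_diff2[OF w])
        also have "norm \<dots> \<le> norm (Om \<omega> (X n - a) (X n)) + norm (Om \<omega> a (X n - a))" by (rule norm_triangle_ineq)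
        also have "\<dots> \<le> CC \<omega> * norm (X n) * norm (X n - a) + CC \<omega> * norm (X n - a) * norm a"
          by (intro add_mono Om_bd[OF w])
        finally show "norm (Om \<omega> (X n) (X n) - Om \<omega> a a) \<le> CC \<omega> * norm (X n) * norm (X n - a) + CC \<omega> * norm (X n - a) * norm a" .
      qed
    qed
    then show ?thesis by (rule LIM_zero_cancel)
  qed
  have pos: "0 \<le> Om \<omega> (X n) (X n)" for n using Om_A0[OF w X(1)] w_pos[OF w X(1)] by simp
  have "0 \<le> Re (Om \<omega> a a)"
    using LIMSEQ_le_const[OF tendsto_Re[OF conv]] pos by (simp add: less_eq_complex_def)
  moreover have "Im (Om \<omega> a a) = 0"
  proof -
    have "(\<lambda>n. Im (Om \<omega> (X n) (X n))) = (\<lambda>n. 0)" using pos by (simp add: less_eq_complex_def)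
    then show ?thesis using tendsto_Im[OF conv] LIMSEQ_unique tendsto_const by metis
  qed
  ultimately show ?thesis by (simp add: less_eq_complex_def)
qed

end
end

lemma quad0: fixes u R :: real assumes "R \<ge> 0" "\<And>t. 0 \<le> t * u + t^2 * R" shows "u = 0"
proof (rule ccontr)
  assume u: "u \<noteq> 0"
  define s where "s = 1 / (R + 1)"
  have s: "s > 0" "s * R < 1" using assms(1) by (auto simp: s_def)
  have "0 \<le> (- u * s) * u + (- u * s)^2 * R" using assms(2) .
  also have "\<dots> = s * u^2 * (s * R - 1)" by (simp add: algebra_simps power2_eq_square)
  also have "\<dots> < 0" using s u by (intro mult_pos_neg) auto
  finally show False by simp
qed

lemma zl: fixes p q r :: complex
  assumes r: "0 \<le> r" and h1: "\<And>t::real. 0 \<le> of_real t * (p + q) + of_real (t^2) * r"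
    and h2: "\<And>t::real. 0 \<le> - \<i> * of_real t * p + \<i> * of_real t * q + of_real (t^2) * r"
  shows "p = 0"
proof -
  have ir: "Im r = 0" "Re r \<ge> 0" using r by (auto simp: less_eq_complex_def)
  have a1: "0 \<le> t * Re (p + q) + t^2 * Re r" for t using h1[of t] ir by (simp add: less_eq_complex_def)
  have a2: "Im (p + q) = 0" using h1[of 1] ir by (simp add: less_eq_complex_def)
  have b1: "0 \<le> t * (Im p - Im q) + t^2 * Re r" for t using h2[of t] ir by (simp add: less_eq_complex_def algebra_simps)
  have b2: "Re q - Re p = 0" using h2[of 1] ir by (simp add: less_eq_complex_def algebra_simps)
  have "Re (p + q) = 0" by (rule quad0[OF ir(2) a1])
  moreover have "Im p - Im q = 0" by (rule quad0[OF ir(2) b1])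
  ultimately show ?thesis using a2 b2 by (simp add: complex_eq_iff)
qed

context bqsa begin

definition wx :: "('a \<Rightarrow> complex) \<Rightarrow> 'a \<Rightarrow> 'a \<Rightarrow> complex" where
  "wx \<omega> x = (\<lambda>b. \<omega> (qmult (qmult (star x) b) x))"

lemma R: assumes "x \<in> A0" "y \<in> A0" "z \<in> A0"
  shows "qmult (qmult (star x) (qmult (qmult (star y) b) z)) x = qmult (qmult (star (qmult y x)) b) (qmult z x)"
proof -
  have "qmult (qmult (star (qmult y x)) b) (qmult z x) = qmult (qmult (star x) (qmult (star y) b)) (qmult z x)"
    using assms by (simp add: star_qm assoc3 A0_star)
  also have "\<dots> = qmult (qmult (qmult (star x) (qmult (star y) b)) z) x"
    using assms by (simp add: assoc2)
  also have "\<dots> = qmult (qmult (star x) (qmult (qmult (star y) b) z)) x"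
    using assms by (simp add: assoc1 A0_star)
  finally show ?thesis by simp
qed

lemma wx_Rc: assumes w: "\<omega> \<in> Rc A0 sm star qmult" and x: "x \<in> A0"
  shows "wx \<omega> x \<in> Rc A0 sm star qmult"
proof -
  have sq1: "wx \<omega> x (qmult (star y) y) = \<omega> (qmult (star (qmult y x)) (qmult y x))" if y: "y \<in> A0" for y
    using R[OF x y y, of e] by (simp add: wx_def)
  have lin: "clinear_fun sm (wx \<omega> x)"
    unfolding clinear_fun_def wx_def using x
    by (simp add: qm_addr qm_addl A0_star w_add[OF w] qm_smr qm_sml w_sm[OF w])
  have L1: "\<forall>y\<in>A0. 0 \<le> wx \<omega> x (qmult (star y) y)"
    using sq1 w_pos[OF w] A0_mult x by simp
  have L2: "\<forall>y\<in>A0. \<forall>z\<in>A0. \<forall>b. wx \<omega> x (qmult (qmult (star z) (star b)) y) = cnj (wx \<omega> x (qmult (qmult (star y) b) z))"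
  proof (intro ballI allI)
    fix y z b assume y: "y \<in> A0" and z: "z \<in> A0"
    have "wx \<omega> x (qmult (qmult (star z) (star b)) y) = \<omega> (qmult (qmult (star (qmult z x)) (star b)) (qmult y x))"
      using R[OF x z y] by (simp add: wx_def)
    also have "\<dots> = cnj (\<omega> (qmult (qmult (star (qmult y x)) b) (qmult z x)))"
      using w_L2[OF w, of "qmult y x" "qmult z x" b] A0_mult x y z by simp
    also have "\<dots> = cnj (wx \<omega> x (qmult (qmult (star y) b) z))"
      using R[OF x y z] by (simp add: wx_def)
    finally show "wx \<omega> x (qmult (qmult (star z) (star b)) y) = cnj (wx \<omega> x (qmult (qmult (star y) b) z))" .
  qed
  have L3: "\<exists>\<gamma>>0. \<forall>y\<in>A0. cmod (wx \<omega> x (qmult (star b) y)) \<le> \<gamma> * sqrt (cmod (wx \<omega> x (qmult (star y) y)))" for b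
  proof -
    obtain \<gamma> where g: "\<gamma> > 0" "\<forall>u\<in>A0. cmod (\<omega> (qmult (star (qmult b x)) u)) \<le> \<gamma> * sqrt (cmod (\<omega> (qmult (star u) u)))"
      using w_L3[OF w, of "qmult b x"] by blast
    have "cmod (wx \<omega> x (qmult (star b) y)) \<le> \<gamma> * sqrt (cmod (wx \<omega> x (qmult (star y) y)))" if y: "y \<in> A0" for y
    proof -
      have "wx \<omega> x (qmult (star b) y) = \<omega> (qmult (star (qmult b x)) (qmult y x))"
        using x y by (simp add: wx_def star_qm assoc2 assoc1 A0_star)
      then show ?thesis using g(2) A0_mult[OF y x] sq1[OF y] by simp
    qed
    then show ?thesis using g(1) by blast
  qed
  have cont: "continuous_on UNIV (wx \<omega> x)"
  proof -
    have "continuous_on UNIV (\<lambda>b. qmult (qmult (star x) b) x)"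
      using continuous_on_compose2[OF cont_r[OF x] cont_l[OF A0_star[OF x]]] by auto
    then show ?thesis unfolding wx_def using continuous_on_compose2[OF w_cont[OF w]] by auto
  qed
  show ?thesis unfolding Rc_def representable_def using lin L1 L2 L3 cont by blast
qed

end

context bqsa begin

lemma sesq_expand: assumes "sesquilinear_form sm \<Omega>"
  shows "\<Omega> (a + sm s b) (a + sm s b) = \<Omega> a a + cnj s * \<Omega> a b + s * \<Omega> b a + (s * cnj s) * \<Omega> b b"
  using assms unfolding sesquilinear_form_def by (simp add: algebra_simps)

lemma zero_form: assumes ses: "sesquilinear_form sm \<Omega>" and pos: "\<And>c. 0 \<le> \<Omega> c c" and a: "\<Omega> a a = 0"
  shows "\<Omega> a b = 0"
proof (rule zl)
  show "0 \<le> \<Omega> b b" by (rule pos)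
  fix t :: real
  have "0 \<le> \<Omega> (a + sm (of_real t) b) (a + sm (of_real t) b)" by (rule pos)
  also have "\<dots> = of_real t * (\<Omega> a b + \<Omega> b a) + of_real (t^2) * \<Omega> b b"
    using sesq_expand[OF ses] a by (simp add: algebra_simps power2_eq_square)
  finally show "0 \<le> of_real t * (\<Omega> a b + \<Omega> b a) + of_real (t^2) * \<Omega> b b" .
  have "0 \<le> \<Omega> (a + sm (\<i> * of_real t) b) (a + sm (\<i> * of_real t) b)" by (rule pos)
  also have "\<dots> = - \<i> * of_real t * \<Omega> a b + \<i> * of_real t * \<Omega> b a + of_real (t^2) * \<Omega> b b"
    using sesq_expand[OF ses] a by (simp add: algebra_simps power2_eq_square)
  finally show "0 \<le> - \<i> * of_real t * \<Omega> a b + \<i> * of_real t * \<Omega> b a + of_real (t^2) * \<Omega> b b" .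
qed

definition NOm :: "('a \<Rightarrow> complex) \<Rightarrow> 'a \<Rightarrow> 'a \<Rightarrow> complex" where
  "NOm \<omega> a b = Om \<omega> a b / of_real (CC \<omega>)"

lemma NOm_S: assumes w: "\<omega> \<in> Rc A0 sm star qmult" shows "NOm \<omega> \<in> S_A0 A0 sm star qmult"
proof -
  have C: "CC \<omega> > 0" using CC(1)[OF w] .
  have ses: "sesquilinear_form sm (NOm \<omega>)"
    unfolding sesquilinear_form_def NOm_def
    by (simp add: Om_add1[OF w] Om_add2[OF w] Om_sm1[OF w] Om_sm2[OF w] add_divide_distrib)
  have pos: "0 \<le> NOm \<omega> a a" for a
    using Om_pos[OF w, of a] C by (simp add: NOm_def less_eq_complex_def Re_divide_of_real Im_divide_of_real)
  have inv: "NOm \<omega> (qmult a x) y = NOm \<omega> x (qmult (star a) y)" if "x \<in> A0" "y \<in> A0" for a x y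
    using Om_inv[OF w that] by (simp add: NOm_def)
  have bd: "cmod (NOm \<omega> a b) \<le> norm a * norm b" for a b
  proof -
    have "cmod (NOm \<omega> a b) = cmod (Om \<omega> a b) / CC \<omega>" using C by (simp add: NOm_def norm_divide)
    also have "\<dots> \<le> (CC \<omega> * norm b * norm a) / CC \<omega>" using Om_bd[OF w] C by (intro divide_right_mono) auto
    also have "\<dots> = norm a * norm b" using C by simp
    finally show ?thesis .
  qed
  show ?thesis unfolding S_A0_def using ses pos inv bd by blast
qed

lemma NOm_e: assumes w: "\<omega> \<in> Rc A0 sm star qmult" shows "NOm \<omega> a e = \<omega> a / of_real (CC \<omega>)"
  using Om_A0[OF w e_A0, of a] by (simp add: NOm_def)

lemma pos_Aplus: fixes \<psi> :: "'a \<Rightarrow> complex" assumes add: "\<And>a b. \<psi> (a + b) = \<psi> a + \<psi> b" and cont: "continuous_on UNIV \<psi>"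
    and sq: "\<And>x. x \<in> A0 \<Longrightarrow> 0 \<le> \<psi> (qmult (star x) x)" and a: "a \<in> A_plus A0 star qmult"
  shows "0 \<le> \<psi> a"
proof -
  have p0: "\<psi> 0 = 0" using add[of 0 0] by simp
  have sum: "\<psi> (\<Sum>k<n. f k) = (\<Sum>k<n. \<psi> (f k))" for f :: "nat \<Rightarrow> 'a" and n :: nat
    by (induction n) (simp_all add: p0 add)
  have P: "0 \<le> \<psi> b" if "b \<in> A0_plus A0 star qmult" for b
  proof -
    from that obtain n :: nat and xs where "\<forall>k<n. xs k \<in> A0" "b = (\<Sum>k<n. qmult (star (xs k)) (xs k))"
      unfolding A0_plus_def mem_Collect_eq by blast
    then show ?thesis by (simp add: sum) (rule sum_nonneg, simp add: sq)
  qed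
  obtain X where X: "\<And>n. X n \<in> A0_plus A0 star qmult" "X \<longlonglongrightarrow> a"
    using a unfolding A_plus_def closure_sequential by blast
  have conv: "(\<lambda>n. \<psi> (X n)) \<longlonglongrightarrow> \<psi> a" using continuous_on_tendsto_compose[OF cont X(2)] by simp
  have pos: "0 \<le> \<psi> (X n)" for n using P X(1) by blast
  have "0 \<le> Re (\<psi> a)"
    using LIMSEQ_le_const[OF tendsto_Re[OF conv]] pos by (simp add: less_eq_complex_def)
  moreover have "Im (\<psi> a) = 0"
  proof -
    have "(\<lambda>n. Im (\<psi> (X n))) = (\<lambda>n. 0)" using pos by (simp add: less_eq_complex_def)
    then show ?thesis using tendsto_Im[OF conv] LIMSEQ_unique tendsto_const by metis
  qed
  ultimately show ?thesis by (simp add: less_eq_complex_def)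
qed

lemma w_Aplus: "\<omega> \<in> Rc A0 sm star qmult \<Longrightarrow> a \<in> A_plus A0 star qmult \<Longrightarrow> 0 \<le> \<omega> a"
  by (rule pos_Aplus[of \<omega>]) (auto simp: w_add w_cont w_pos)

end

context bqsa begin

lemma AR_UNIV: "A_R A0 sm star qmult = UNIV"
  unfolding A_R_def using cdom by auto

lemma cz: "(0::complex) \<le> z \<Longrightarrow> \<not> 0 < z \<Longrightarrow> z = 0"
  by (auto simp: less_eq_complex_def less_complex_def complex_eq_iff)

context fixes \<Omega> assumes O: "\<Omega> \<in> S_A0 A0 sm star qmult"
begin
lemma O_ses: "sesquilinear_form sm \<Omega>" using O by (simp add: S_A0_def)
lemma O_pos: "0 \<le> \<Omega> a a" using O by (simp add: S_A0_def)
lemma O_inv: "x \<in> A0 \<Longrightarrow> y \<in> A0 \<Longrightarrow> \<Omega> (qmult a x) y = \<Omega> x (qmult (star a) y)" using O by (simp add: S_A0_def)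
lemma O_bd: "cmod (\<Omega> a b) \<le> norm a * norm b" using O by (simp add: S_A0_def)
lemma O_add1: "\<Omega> (a + b) c = \<Omega> a c + \<Omega> b c" using O_ses by (simp add: sesquilinear_form_def)
lemma O_add2: "\<Omega> a (b + c) = \<Omega> a b + \<Omega> a c" using O_ses by (simp add: sesquilinear_form_def)
lemma O_sm1: "\<Omega> (sm z a) b = z * \<Omega> a b" using O_ses by (simp add: sesquilinear_form_def)
lemma O_sm2: "\<Omega> a (sm z b) = cnj z * \<Omega> a b" using O_ses by (simp add: sesquilinear_form_def)
lemma O_bl1: "bounded_linear (\<lambda>u. \<Omega> u z)"
  by (rule bounded_linear_intro[where K="norm z"])
     (auto simp: O_add1 O_bd simp flip: sm_real simp: O_sm1 scaleR_conv_of_real)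
lemma O_bl2: "bounded_linear (\<lambda>u. \<Omega> z u)"
proof -
  have b: "cmod (\<Omega> z x) \<le> norm x * norm z" for x using O_bd[of z x] by (simp add: mult.commute)
  show ?thesis
    by (rule bounded_linear_intro[where K="norm z"])
       (auto simp: O_add2 b simp flip: sm_real simp: O_sm2 scaleR_conv_of_real)
qed
end

lemma suff_ss: assumes P: "condition_P A0 sm star qmult" and S: "Rc_sufficient A0 sm star qmult"
  shows "star_semisimple A0 sm star qmult"
  unfolding star_semisimple_def
proof (intro allI impI)
  fix a :: 'a assume a0: "a \<noteq> 0"
  show "\<exists>\<Omega>\<in>S_A0 A0 sm star qmult. 0 < \<Omega> a a"
  proof (rule ccontr)
    assume N: "\<not> (\<exists>\<Omega>\<in>S_A0 A0 sm star qmult. 0 < \<Omega> a a)"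
    have z: "wx \<omega> x a = 0" if w: "\<omega> \<in> Rc A0 sm star qmult" and x: "x \<in> A0" for \<omega> x
    proof -
      have wr: "wx \<omega> x \<in> Rc A0 sm star qmult" by (rule wx_Rc[OF w x])
      have SS: "NOm (wx \<omega> x) \<in> S_A0 A0 sm star qmult" by (rule NOm_S[OF wr])
      have "NOm (wx \<omega> x) a a = 0" using N SS O_pos[OF SS, of a] cz by blast
      then have "NOm (wx \<omega> x) a e = 0" using zero_form[OF O_ses[OF SS] O_pos[OF SS]] by blast
      then show ?thesis using NOm_e[OF wr] CC(1)[OF wr] by simp
    qed
    have zm: "wx \<omega> x (- a) = 0" if w: "\<omega> \<in> Rc A0 sm star qmult" and x: "x \<in> A0" for \<omega> x
      using w_uminus[OF wx_Rc[OF w x], of a] z[OF w x] by simp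
    have "\<forall>\<omega>\<in>Rc A0 sm star qmult. \<forall>x\<in>A0. 0 \<le> \<omega> (qmult (qmult (star x) a) x)"
      by (intro ballI, frule z, assumption, simp add: wx_def)
    then have ap: "a \<in> A_plus A0 star qmult"
      using P unfolding condition_P_def by blast
    have "\<forall>\<omega>\<in>Rc A0 sm star qmult. \<forall>x\<in>A0. 0 \<le> \<omega> (qmult (qmult (star x) (- a)) x)"
      by (intro ballI, frule zm, assumption, simp add: wx_def)
    then have amp: "- a \<in> A_plus A0 star qmult"
      using P unfolding condition_P_def by blast
    obtain \<omega> where w: "\<omega> \<in> Rc A0 sm star qmult" "0 < \<omega> a" using S ap a0 unfolding Rc_sufficient_def by blast
    have "0 \<le> \<omega> (- a)" by (rule w_Aplus[OF w(1) amp])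
    then show False using w(2) w_uminus[OF w(1), of a] by (simp add: less_eq_complex_def less_complex_def)
  qed
qed

lemma ss_suff: assumes P: "condition_P A0 sm star qmult" and SS: "star_semisimple A0 sm star qmult"
  shows "Rc_sufficient A0 sm star qmult"
  unfolding Rc_sufficient_def
proof (intro ballI impI)
  fix a assume ap: "a \<in> A_plus A0 star qmult" and a0: "a \<noteq> 0"
  show "\<exists>\<omega>\<in>Rc A0 sm star qmult. 0 < \<omega> a"
  proof (rule ccontr)
    assume N: "\<not> (\<exists>\<omega>\<in>Rc A0 sm star qmult. 0 < \<omega> a)"
    have z: "\<omega> a = 0" if w: "\<omega> \<in> Rc A0 sm star qmult" for \<omega>
      using N w w_Aplus[OF w ap] cz by blast
    have zm: "wx \<omega> x (- a) = 0" if w: "\<omega> \<in> Rc A0 sm star qmult" and x: "x \<in> A0" for \<omega> x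
      using w_uminus[OF wx_Rc[OF w x], of a] z[OF wx_Rc[OF w x]] by simp
    have "\<forall>\<omega>\<in>Rc A0 sm star qmult. \<forall>x\<in>A0. 0 \<le> \<omega> (qmult (qmult (star x) (- a)) x)"
      by (intro ballI, frule zm, assumption, simp add: wx_def)
    then have amp: "- a \<in> A_plus A0 star qmult"
      using P unfolding condition_P_def by blast
    obtain \<Omega> where O: "\<Omega> \<in> S_A0 A0 sm star qmult" "0 < \<Omega> a a" using SS a0 unfolding star_semisimple_def by blast
    have psi0: "\<Omega> (qmult a z) z = 0" if z: "z \<in> A0" for z
    proof -
      define \<psi> where "\<psi> b = \<Omega> (qmult b z) z" for b
      have add: "\<psi> (b + c) = \<psi> b + \<psi> c" for b c by (simp add: \<psi>_def qm_addl[OF z] O_add1[OF O(1)])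
      have cont: "continuous_on UNIV \<psi>"
        unfolding \<psi>_def using continuous_on_compose2[OF linear_continuous_on[OF O_bl1[OF O(1)]] cont_r[OF z]] by auto
      have sq: "0 \<le> \<psi> (qmult (star x) x)" if x: "x \<in> A0" for x
      proof -
        have "\<psi> (qmult (star x) x) = \<Omega> (qmult (star x) (qmult x z)) z"
          using x z by (simp add: \<psi>_def assoc3 A0_star)
        also have "\<dots> = \<Omega> (qmult x z) (qmult x z)"
          using O_inv[OF O(1) A0_mult[OF x z] z, of "star x"] by simp
        finally show ?thesis using O_pos[OF O(1)] by simp
      qed
      have "0 \<le> \<psi> a" by (rule pos_Aplus[OF add cont sq ap])
      moreover have "0 \<le> \<psi> (- a)" by (rule pos_Aplus[OF add cont sq amp])
      moreover have "\<psi> (- a) = - \<psi> a"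
        using add[of a "- a"] add[of 0 0] by (simp add: eq_neg_iff_add_eq_0)
      ultimately have "\<psi> a = 0" by (simp add: less_eq_complex_def complex_eq_iff)
      then show ?thesis by (simp add: \<psi>_def)
    qed
    have B0: "\<Omega> (qmult a x) y = 0" if x: "x \<in> A0" and y: "y \<in> A0" for x y
    proof -
      have "\<Omega> (qmult a (x + y)) (x + y) = 0" using psi0 A0_add[OF x y] .
      then have h1: "\<Omega> (qmult a x) y + \<Omega> (qmult a y) x = 0"
        using psi0[OF x] psi0[OF y] x y by (simp add: qm_addr0 O_add1[OF O(1)] O_add2[OF O(1)] add.commute)
      have iy: "sm \<i> y \<in> A0" using A0_sm[OF y] .
      have "\<Omega> (qmult a (x + sm \<i> y)) (x + sm \<i> y) = 0" using psi0 A0_add[OF x iy] .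
      then have h2: "- \<i> * \<Omega> (qmult a x) y + \<i> * \<Omega> (qmult a y) x = 0"
        using psi0[OF x] psi0[OF y] x y iy
        by (simp add: qm_addr0 qm_smr0 O_add1[OF O(1)] O_add2[OF O(1)] O_sm1[OF O(1)] O_sm2[OF O(1)] algebra_simps)
      from h1 h2 show ?thesis by (simp add: algebra_simps complex_eq_iff)
    qed
    have ay: "\<Omega> a y = 0" if y: "y \<in> A0" for y using B0[OF e_A0 y] by simp
    obtain Y where Y: "\<And>n. Y n \<in> A0" "Y \<longlonglongrightarrow> a" using approx by blast
    have "(\<lambda>n. \<Omega> a (Y n)) \<longlonglongrightarrow> \<Omega> a a"
      by (rule bounded_linear.tendsto[OF O_bl2[OF O(1)] Y(2)])
    then have "(\<lambda>n. 0) \<longlonglongrightarrow> \<Omega> a a" using ay Y(1) by simp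
    then have "\<Omega> a a = 0" using LIMSEQ_unique tendsto_const by metis
    then show False using O(2) by simp
  qed
qed

end

theorem mainTheorem6:
  fixes A0 :: "'a::banach set"
    and sm :: "complex \<Rightarrow> 'a \<Rightarrow> 'a"
    and star :: "'a \<Rightarrow> 'a"
    and qmult :: "'a \<Rightarrow> 'a \<Rightarrow> 'a"
    and e :: 'a
  assumes "banach_quasi_star_algebra A0 sm star qmult"
    and "qsa_unit A0 qmult e"
  shows "(Rc_sufficient A0 sm star qmult \<longleftrightarrow> fully_representable A0 sm star qmult)
       \<and> (condition_P A0 sm star qmult \<longrightarrow>
            (Rc_sufficient A0 sm star qmult \<longleftrightarrow> star_semisimple A0 sm star qmult))"
proof -
  interpret bqsa A0 sm star qmult e using assms by unfold_locales
  show ?thesis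
    using AR_UNIV suff_ss ss_suff by (auto simp: fully_representable_def)
qed

end
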